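(* Let $n\ge1$, $0<k\le1$, $P\in\mathscr P_n$ and $Q(z)=z^n\overline{P(1/\overline{z})}$. Then for all $\alpha,\beta\in\mathbb C$ with $|\alpha|\le1$, $|\beta|\le1$, all $R>r\ge k$ and all $|z|\ge1$, writing $\Phi=\Phi_k(R,r,\alpha,\beta)$, $$\big|B[P\circ\sigma](z)+\Phi B[P\circ\rho](z)\big|+k^n\big|B[Q\circ\tau](z)+\Phi B[Q\circ\eta](z)\big|\le\left\{|\lambda_0|\,|1+\Phi|+\frac{|B[z^n]|}{k^n}\,|R^n+r^n\Phi|\right\}\max_{|z|=k}|P(z)|.$$
   Context: For an integer $n\ge1$, $\mathscr P_n$ denotes the set of complex polynomials of degree at most $n$. Fix complex numbers $\lambda_0,\lambda_1,\lambda_2$ such that all zeros of $U(z)=\lambda_0+n\lambda_1 z+\frac{n(n-1)}{2}\lambda_2 z^2$ lie in the half-plane $\{z\in\mathbb C:|z|\le|z-n/2|\}$. The operator $B$ (of the class $\mathcal B_n$) sends $P\in\mathscr P_n$ to $B[P](z)=\lambda_0P(z)+\lambda_1\frac{nz}{2}P'(z)+\lambda_2\left(\frac{nz}{2}\right)^2\frac{P''(z)}{2!}$. For a polynomial $P$ and a map $\rho$, $P\circ\rho$ denotes $z\mapsto P(\rho(z))$, and $B[P\circ\rho](z)$ is $B$ applied to the polynomial $P\circ\rho$, evaluated at $z$. $B[z^n]$ denotes $B$ applied to the monomial $z\mapsto z^n$, evaluated at the point $z$ under consideration; thus $|B[z^n]|=|z|^n\,|\lambda_0+\lambda_1 n^2/2+\lambda_2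 n^3(n-1)/8|$. For $k>0$, $R,r>0$ and $\alpha,\beta\in\mathbb C$: $\Phi_k(R,r,\alpha,\beta)=\beta\left\{\left(\frac{R+k}{k+r}\right)^n-|\alpha|\right\}-\alpha$; and $\sigma(z)=Rz$, $\rho(z)=rz$, $\tau(z)=Rz/k^2$, $\eta(z)=rz/k^2$. *)

theory Defs
  imports "HOL-Analysis.Analysis" "HOL-Computational_Algebra.Polynomial"
begin

definition Bop :: "complex \<Rightarrow> complex \<Rightarrow> complex \<Rightarrow> nat \<Rightarrow> complex poly \<Rightarrow> complex \<Rightarrow> complex" where
  "Bop l0 l1 l2 n P z =
     l0 * poly P z + l1 * (of_nat n * z / 2) * poly (pderiv P) z
     + l2 * (of_nat n * z / 2)^2 * poly (pderiv (pderiv P)) z / 2"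

definition Upoly :: "complex \<Rightarrow> complex \<Rightarrow> complex \<Rightarrow> nat \<Rightarrow> complex \<Rightarrow> complex" where
  "Upoly l0 l1 l2 n z = l0 + of_nat n * l1 * z + of_nat (n * (n - 1)) / 2 * l2 * z^2"

text \<open>Q(z) = z^n conj(P(1/conj z)) as a polynomial (P of degree at most n).\<close>
definition reflect_conj :: "nat \<Rightarrow> complex poly \<Rightarrow> complex poly" where
  "reflect_conj n P = (\<Sum>i\<le>n. monom (cnj (coeff P (n - i))) i)"

definition Phi :: "nat \<Rightarrow> real \<Rightarrow> real \<Rightarrow> real \<Rightarrow> complex \<Rightarrow> complex \<Rightarrow> complex" where
  "Phi n k R r \<alpha> \<beta> = \<beta> * complex_of_real (((R + k) / (k + r))^n - cmod \<alpha>) - \<alpha>"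

end

theory Submission
  imports Defs "HOL-Computational_Algebra.Fundamental_Theorem_Algebra"
begin


lemma roots_unity_pow_sum:
  fixes N m :: nat
  assumes "0 < m" "m < N"
  shows "(\<Sum>j<N. exp (2 * of_real pi * \<i> * of_nat j / of_nat N) ^ m) = (0::complex)"
proof -
  define w where "w = exp (2 * of_real pi * \<i> * of_nat m / of_nat N)"
  have e: "exp (2 * of_real pi * \<i> * of_nat j / of_nat N) ^ m = w ^ j" for j
  proof -
    have "exp (2 * of_real pi * \<i> * of_nat j / of_nat N) ^ m
        = exp (of_nat m * (2 * of_real pi * \<i> * of_nat j / of_nat N))"
      by (rule exp_of_nat_mult[symmetric])
    also have "\<dots> = exp (of_nat j * (2 * of_real pi * \<i> * of_nat m / of_nat N))"
      by (simp add: algebra_simps)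
    also have "\<dots> = w ^ j" unfolding w_def by (rule exp_of_nat_mult)
    finally show ?thesis .
  qed
  have w1: "w \<noteq> 1" using complex_root_unity_eq_1[of N m] assms unfolding w_def
    by (auto dest: dvd_imp_le)
  have wN: "w ^ N = 1" unfolding w_def using assms complex_root_unity[of N m] by simp
  show ?thesis unfolding e using w1 wN by (simp add: geometric_sum)
qed

lemma sum_shift_binom:
  fixes u c :: complex and N i :: nat
  assumes "i < N"
  shows "(\<Sum>j<N. (u + c * exp (2 * of_real pi * \<i> * of_nat j / of_nat N)) ^ i) = of_nat N * u ^ i"
proof -
  define e where "e j = exp (2 * of_real pi * \<i> * of_nat j / of_nat N)" for j :: nat
  have "(\<Sum>j<N. (u + c * e j) ^ i) = (\<Sum>j<N. \<Sum>l\<le>i. of_nat (i choose l) * (c * e j) ^ l * u ^ (i - l))"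
    by (intro sum.cong refl) (subst add.commute, subst binomial_ring, simp)
  also have "\<dots> = (\<Sum>l\<le>i. of_nat (i choose l) * c ^ l * u ^ (i - l) * (\<Sum>j<N. e j ^ l))"
    by (subst sum.swap) (simp add: sum_distrib_left power_mult_distrib mult_ac)
  also have "\<dots> = (\<Sum>l\<le>i. if l = 0 then of_nat N * u ^ i else 0)"
  proof (intro sum.cong refl)
    fix l assume l: "l \<in> {..i}"
    show "of_nat (i choose l) * c ^ l * u ^ (i - l) * (\<Sum>j<N. e j ^ l) = (if l = 0 then of_nat N * u ^ i else 0)"
    proof (cases "l = 0")
      case False
      then have "(\<Sum>j<N. e j ^ l) = 0" unfolding e_def
        using roots_unity_pow_sum[of l N] l assms by auto
      then show ?thesis using False by simp
    qed simp
  qed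
  also have "\<dots> = of_nat N * u ^ i" by simp
  finally show ?thesis unfolding e_def .
qed

lemma poly_as_sum_n:
  fixes p :: "complex poly"
  assumes "degree p \<le> n"
  shows "poly p x = (\<Sum>i\<le>n. coeff p i * x ^ i)"
proof -
  have "poly p x = (\<Sum>i\<le>degree p. coeff p i * x ^ i)" by (rule poly_altdef)
  also have "\<dots> = (\<Sum>i\<le>n. coeff p i * x ^ i)"
    by (rule sum.mono_neutral_left) (use assms in \<open>auto intro: le_degree\<close>)
  finally show ?thesis .
qed

lemma mean_value_poly:
  fixes g :: "complex poly"
  assumes "degree g < N"
  shows "of_nat N * poly g u = (\<Sum>j<N. poly g (u + c * exp (2 * of_real pi * \<i> * of_nat j / of_nat N)))"
proof -
  define e where "e j = exp (2 * of_real pi * \<i> * of_nat j / of_nat N)" for j :: nat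
  have "(\<Sum>j<N. poly g (u + c * e j)) = (\<Sum>j<N. \<Sum>i\<le>degree g. coeff g i * (u + c * e j) ^ i)"
    by (simp add: poly_altdef)
  also have "\<dots> = (\<Sum>i\<le>degree g. coeff g i * (\<Sum>j<N. (u + c * e j) ^ i))"
    by (subst sum.swap) (simp add: sum_distrib_left)
  also have "\<dots> = (\<Sum>i\<le>degree g. coeff g i * (of_nat N * u ^ i))"
    by (intro sum.cong refl) (use assms sum_shift_binom in \<open>auto simp: e_def\<close>)
  also have "\<dots> = of_nat N * poly g u" by (simp add: poly_altdef sum_distrib_left mult_ac)
  finally show ?thesis unfolding e_def by simp
qed

lemma max_modulus_poly:
  fixes g :: "complex poly" and k M :: real
  assumes k: "k > 0" and bd: "\<And>w. cmod w = k \<Longrightarrow> cmod (poly g w) \<le> M" and u: "cmod u \<le> k"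
  shows "cmod (poly g u) \<le> M"
proof -
  have "\<exists>x\<in>cball 0 k. \<forall>y\<in>cball 0 k. cmod (poly g y) \<le> cmod (poly g x)"
    by (rule continuous_attains_sup) (use k in \<open>auto intro!: continuous_intros\<close>)
  then obtain u0 where u0: "cmod u0 \<le> k" and mx: "\<And>y. cmod y \<le> k \<Longrightarrow> cmod (poly g y) \<le> cmod (poly g u0)"
    by auto
  define m where "m = cmod (poly g u0)"
  define N where "N = Suc (degree g)"
  define \<rho> where "\<rho> = k - cmod u0"
  define d where "d = (if u0 = 0 then 1 else u0 / of_real (cmod u0))"
  define e where "e j = exp (2 * of_real pi * \<i> * of_nat j / of_nat N)" for j :: nat
  define p where "p j = u0 + of_real \<rho> * d * e j" for j
  have ne: "cmod (e j) = 1" for j unfolding e_def by (simp add: norm_exp_eq_Re)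
  have nd: "cmod d = 1" unfolding d_def by (auto simp: norm_divide)
  have "\<rho> \<ge> 0" using u0 by (simp add: \<rho>_def)
  have pin: "cmod (p j) \<le> k" for j
  proof -
    have "cmod (p j) \<le> cmod u0 + cmod (of_real \<rho> * d * e j)" unfolding p_def by (rule norm_triangle_ineq)
    also have "\<dots> = cmod u0 + \<rho>" using u0 ne nd \<open>\<rho> \<ge> 0\<close> by (simp add: norm_mult)
    finally show ?thesis by (simp add: \<rho>_def)
  qed
  have p0: "cmod (p 0) = k"
  proof (cases "u0 = 0")
    case True then show ?thesis using k by (simp add: p_def d_def e_def \<rho>_def)
  next
    case False
    have p0e: "p 0 = of_real (cmod u0 + \<rho>) * d" using False
      by (simp add: p_def d_def e_def field_simps)
    have "cmod u0 + \<rho> = k" by (simp add: \<rho>_def)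
    then show ?thesis using nd p0e k by (simp add: norm_mult)
  qed
  have "of_nat N * poly g u0 = (\<Sum>j<N. poly g (p j))"
    unfolding p_def e_def by (rule mean_value_poly) (simp add: N_def)
  hence "real N * m = cmod (\<Sum>j<N. poly g (p j))"
    by (metis m_def norm_mult norm_of_nat)
  also have "\<dots> \<le> (\<Sum>j<N. cmod (poly g (p j)))" by (rule norm_sum)
  also have "\<dots> = cmod (poly g (p 0)) + (\<Sum>j<degree g. cmod (poly g (p (Suc j))))"
    unfolding N_def by (rule sum.lessThan_Suc_shift)
  also have "(\<Sum>j<degree g. cmod (poly g (p (Suc j)))) \<le> (\<Sum>j<degree g. m)"
    by (intro sum_mono) (use mx pin in \<open>auto simp: m_def\<close>)
  finally have "real N * m \<le> cmod (poly g (p 0)) + real (degree g) * m" by simp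
  hence "m \<le> cmod (poly g (p 0))" by (simp add: N_def algebra_simps)
  also have "\<dots> \<le> M" using bd p0 by blast
  finally show ?thesis using mx[OF u] m_def by simp
qed

section \<open>Reflection\<close>

lemma coeff_reflect_conj:
  "coeff (reflect_conj n g) i = (if i \<le> n then cnj (coeff g (n - i)) else 0)"
  by (simp add: reflect_conj_def coeff_sum coeff_monom)

lemma degree_reflect_conj: "degree (reflect_conj n g) \<le> n"
  by (rule degree_le) (simp add: coeff_reflect_conj)

lemma poly_reflect_conj:
  assumes "degree g \<le> n" "w \<noteq> 0"
  shows "poly (reflect_conj n g) w = w ^ n * cnj (poly g (1 / cnj w))"
proof -
  have "poly (reflect_conj n g) w = (\<Sum>i\<le>n. cnj (coeff g (n - i)) * w ^ i)"
    by (subst poly_as_sum_n[OF degree_reflect_conj]) (simp add: coeff_reflect_conj)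
  also have "\<dots> = (\<Sum>j\<le>n. cnj (coeff g j) * w ^ (n - j))"
    by (rule sum.reindex_bij_witness[where i="\<lambda>i. n - i" and j="\<lambda>i. n - i"]) auto
  also have "\<dots> = (\<Sum>j\<le>n. w ^ n * (cnj (coeff g j) * (1 / w) ^ j))"
    by (intro sum.cong refl) (use assms in \<open>simp add: power_diff field_simps\<close>)
  also have "\<dots> = w ^ n * cnj (poly g (1 / cnj w))"
    by (subst poly_as_sum_n[OF assms(1)]) (simp add: sum_distrib_left)
  finally show ?thesis .
qed

definition reflk :: "real \<Rightarrow> nat \<Rightarrow> complex poly \<Rightarrow> complex poly" where
  "reflk k n g = smult (of_real (k^n)) (reflect_conj n g \<circ>\<^sub>p [:0, of_real (1/k^2):])"

lemma coeff_reflk: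
  "coeff (reflk k n g) i = (if i \<le> n then of_real (k^n) * of_real (1/k^2) ^ i * cnj (coeff g (n - i)) else 0)"
  by (simp add: reflk_def coeff_pcompose_linear coeff_reflect_conj)

lemma degree_reflk: "degree (reflk k n g) \<le> n"
  by (rule degree_le) (simp add: coeff_reflk)

lemma coeff_reflk_n: "k > 0 \<Longrightarrow> coeff (reflk k n g) n = cnj (coeff g 0) / of_real (k^n)"
  by (simp add: coeff_reflk field_simps power_mult_distrib mult_2_right power_add flip: power_mult)

lemma poly_reflk_0: "poly (reflk k n g) 0 = of_real (k^n) * cnj (coeff g n)"
  by (simp add: poly_0_coeff_0 coeff_reflk)

lemma poly_reflk:
  assumes "degree g \<le> n" "w \<noteq> 0" "k > 0"
  shows "poly (reflk k n g) w = (w / of_real k) ^ n * cnj (poly g (of_real (k^2) / cnj w))"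
proof -
  have w: "w / of_real (k^2) \<noteq> 0" using assms by simp
  have "poly (reflk k n g) w = of_real (k^n) * poly (reflect_conj n g) (w / of_real (k^2))"
    by (simp add: reflk_def poly_pcompose field_simps)
  also have "\<dots> = of_real (k^n) * ((w / of_real (k^2)) ^ n * cnj (poly g (1 / cnj (w / of_real (k^2)))))"
    by (simp only: poly_reflect_conj[OF assms(1) w])
  also have "\<dots> = (w / of_real k) ^ n * cnj (poly g (of_real (k^2) / cnj w))"
    using assms by (simp add: field_simps power2_eq_square power_mult_distrib)
  finally show ?thesis .
qed

lemma reflk_diff_const:
  assumes "k > 0"
  shows "reflk k n (g - [:c:]) = reflk k n g - smult (cnj c / of_real (k^n)) (monom 1 n)"
proof (rule poly_eqI)
  fix i
  show "coeff (reflk k n (g - [:c:])) i = coeff (reflk k n g - smult (cnj c / of_real (k^n)) (monom 1 n)) i"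
    using assms
    by (auto simp: coeff_reflk coeff_monom field_simps power_mult_distrib coeff_pCons split: nat.splits
        simp flip: power_mult simp: mult_2_right power_add)
qed

lemma prod_mset_nonneg: "(\<And>a. a \<in># A \<Longrightarrow> (0::real) \<le> f a) \<Longrightarrow> 0 \<le> (\<Prod>a\<in>#A. f a)"
  by (induction A) auto

lemma prod_mset_pos: "(\<And>a. a \<in># A \<Longrightarrow> (0::real) < f a) \<Longrightarrow> 0 < (\<Prod>a\<in>#A. f a)"
  by (induction A) auto

lemma norm_prod_mset_c: "cmod (\<Prod>a\<in>#A. f a) = (\<Prod>a\<in>#A. cmod (f a))"
  by (induction A) (auto simp: norm_mult)

lemma prod_mset_mono_le:
  fixes f g :: "'a \<Rightarrow> real"
  assumes "\<And>a. a \<in># A \<Longrightarrow> 0 \<le> f a \<and> f a \<le> g a"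
  shows "(\<Prod>a\<in>#A. f a) \<le> (\<Prod>a\<in>#A. g a)"
  using assms
proof (induction A)
  case (add x A)
  have fx: "0 \<le> f x" "f x \<le> g x" using add.prems[of x] by auto
  have h1: "(\<Prod>a\<in>#A. f a) \<le> (\<Prod>a\<in>#A. g a)" using add by auto
  have h2: "0 \<le> (\<Prod>a\<in>#A. f a)" by (rule prod_mset_nonneg) (use add.prems in auto)
  have gx: "0 \<le> g x" using fx by linarith
  have "f x * (\<Prod>a\<in>#A. f a) \<le> g x * (\<Prod>a\<in>#A. g a)"
    by (rule mult_mono[OF fx(2) h1 gx h2])
  then show ?case by simp
qed simp

lemma prod_mset_mono_less:
  fixes f g :: "'a \<Rightarrow> real"
  assumes "A \<noteq> {#}" "\<And>a. a \<in># A \<Longrightarrow> 0 < f a \<and> f a < g a"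
  shows "(\<Prod>a\<in>#A. f a) < (\<Prod>a\<in>#A. g a)"
  using assms
proof (induction A)
  case (add x A)
  show ?case
  proof (cases "A = {#}")
    case True then show ?thesis using add by simp
  next
    case False
    then have "(\<Prod>a\<in>#A. f a) < (\<Prod>a\<in>#A. g a)" using add by auto
    moreover have "0 < (\<Prod>a\<in>#A. f a)" using add by (intro prod_mset_pos) auto
    moreover have fx: "0 < f x" "f x < g x" using add.prems(2)[of x] by auto
    ultimately have "f x * (\<Prod>a\<in>#A. f a) < g x * (\<Prod>a\<in>#A. g a)"
      by (intro mult_strict_mono) auto
    then show ?thesis by simp
  qed
qed simp

lemma poly_decomp:
  fixes p :: "complex poly"
  assumes "p \<noteq> 0"
  shows "poly p x = lead_coeff p * (\<Prod>a\<in>#proots p. (x - a))"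
proof -
  have "poly p x = poly (smult (lead_coeff p) (\<Prod>a\<in>#proots p. [:-a, 1:])) x"
    by (simp only: complex_poly_decompose_multiset)
  then show ?thesis by (simp add: poly_prod_mset)
qed

lemma in_proots: "p \<noteq> 0 \<Longrightarrow> a \<in># proots p \<Longrightarrow> poly p a = 0"
  by simp

lemma blaschke_factor:
  fixes w a :: complex and k :: real
  assumes "k > 0" "cmod w \<ge> k" "cmod a \<ge> k"
  shows "k * cmod (w - a) \<le> cmod (of_real (k^2) - a * cnj w)"
proof -
  have w2: "k^2 \<le> (cmod w)^2" and a2: "k^2 \<le> (cmod a)^2" using assms by (auto intro: power_mono)
  have eq: "(cmod (of_real (k^2) - a * cnj w))^2 - (k * cmod (w - a))^2 = ((cmod a)^2 - k^2) * ((cmod w)^2 - k^2)"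
    by (simp only: power_mult_distrib cmod_power2) (simp add: power2_eq_square algebra_simps)
  have "(k * cmod (w - a))^2 \<le> (cmod (of_real (k^2) - a * cnj w))^2"
  proof -
    have "0 \<le> ((cmod a)^2 - k^2) * ((cmod w)^2 - k^2)" using w2 a2 by (intro mult_nonneg_nonneg) auto
    then show ?thesis using eq by linarith
  qed
  then show ?thesis by (rule power2_le_imp_le) simp
qed

lemma blaschke:
  fixes g :: "complex poly" and k :: real
  assumes k: "k > 0" and dg: "degree g \<le> n" and nz: "\<And>u. cmod u \<le> k \<Longrightarrow> poly g u \<noteq> 0"
  shows "\<And>w. cmod w \<ge> k \<Longrightarrow> cmod (poly g w) \<le> (cmod w / k)^n * cmod (poly g (of_real (k^2) / cnj w))"
    and "cmod (coeff g n) * k^n \<le> cmod (poly g 0)"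
proof -
  have g0: "g \<noteq> 0" using nz[of 0] k by auto
  define A where "A = proots g"
  have rA: "cmod a > k" if "a \<in># A" for a
    using nz[of a] that g0 unfolding A_def by force
  have sA: "size A = degree g" unfolding A_def by (rule size_proots_complex)
  have pg: "poly g x = lead_coeff g * (\<Prod>a\<in>#A. (x - a))" for x
    unfolding A_def by (rule poly_decomp[OF g0])
  {
    fix w :: complex assume w: "cmod w \<ge> k"
    hence w0: "w \<noteq> 0" using k by auto
    define v where "v = of_real (k^2) / cnj w"
    have fac: "cmod (w - a) \<le> (cmod w / k) * cmod (v - a)" if "a \<in># A" for a
    proof -
      have "k * cmod (w - a) \<le> cmod (of_real (k^2) - a * cnj w)"
        using blaschke_factor[OF k w, of a] rA[OF that] by simp
      also have "of_real (k^2) - a * cnj w = cnj w * (v - a)" using w0 by (simp add: v_def field_simps)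
      also have "cmod \<dots> = cmod w * cmod (v - a)" by (simp add: norm_mult)
      finally show ?thesis using k by (simp add: field_simps)
    qed
    have "(\<Prod>a\<in>#A. cmod (w - a)) \<le> (\<Prod>a\<in>#A. (cmod w / k) * cmod (v - a))"
      by (rule prod_mset_mono_le) (use fac in auto)
    also have "\<dots> = (cmod w / k) ^ size A * (\<Prod>a\<in>#A. cmod (v - a))"
      by (simp only: prod_mset.distrib prod_mset_constant)
    also have "\<dots> \<le> (cmod w / k) ^ n * (\<Prod>a\<in>#A. cmod (v - a))"
      using w k sA dg by (intro mult_right_mono power_increasing prod_mset_nonneg) auto
    finally have "(\<Prod>a\<in>#A. cmod (w - a)) \<le> (cmod w / k) ^ n * (\<Prod>a\<in>#A. cmod (v - a))" .
    then have "cmod (lead_coeff g) * (\<Prod>a\<in>#A. cmod (w - a)) \<le> cmod (lead_coeff g) * ((cmod w / k) ^ n * (\<Prod>a\<in>#A. cmod (v - a)))"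
      by (rule mult_left_mono) simp
    then show "cmod (poly g w) \<le> (cmod w / k)^n * cmod (poly g (of_real (k^2) / cnj w))"
      unfolding pg v_def[symmetric] by (simp add: norm_mult norm_prod_mset_c mult_ac)
  }
  show "cmod (coeff g n) * k^n \<le> cmod (poly g 0)"
  proof (cases "degree g = n")
    case False
    then have "coeff g n = 0" using dg by (intro coeff_eq_0) auto
    then show ?thesis by simp
  next
    case True
    have "(\<Prod>a\<in>#A. k) \<le> (\<Prod>a\<in>#A. cmod (0 - a))"
      by (rule prod_mset_mono_le) (use rA k in \<open>auto simp: less_imp_le\<close>)
    then have "k ^ n \<le> (\<Prod>a\<in>#A. cmod (0 - a))" using sA True by simp
    then have "cmod (lead_coeff g) * k ^ n \<le> cmod (lead_coeff g) * (\<Prod>a\<in>#A. cmod (0 - a))"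
      by (rule mult_left_mono) simp
    then show ?thesis using True unfolding pg by (simp add: norm_mult norm_prod_mset_c)
  qed
qed

section \<open>The operator F(Rz) + Phi F(rz)\<close>

lemma ratio_factor_real:
  fixes R r k \<rho> s x :: real
  assumes "R > r" "r \<ge> k" "k > 0" "0 \<le> s" "s < k" "\<rho> \<ge> 1" "x \<ge> - \<rho> * s"
  shows "(r+k)^2 * (R^2*\<rho>^2 - 2*R*x + s^2) - (R+k)^2 * (r^2*\<rho>^2 - 2*r*x + s^2) > 0"
proof -
  define C1 where "C1 = 2*R*r + k*R + k*r"
  define C2 where "C2 = R*r - k^2"
  define C3 where "C3 = R + r + 2*k"
  have C2p: "C2 > 0"
  proof -
    have "k * k \<le> r * k" using assms by (intro mult_right_mono) auto
    moreover have "r * k < r * R" using assms by (intro mult_strict_left_mono) auto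
    ultimately show ?thesis unfolding C2_def by (simp add: power2_eq_square mult.commute)
  qed
  have C1C2: "C1 > C2"
  proof -
    have "R * r > 0" "k * R > 0" "k * r > 0" "k * k > 0" using assms by auto
    then show ?thesis unfolding C1_def C2_def by (simp add: power2_eq_square)
  qed
  have id: "(r+k)^2 * (R^2*\<rho>^2 - 2*R*x + s^2) - (R+k)^2 * (r^2*\<rho>^2 - 2*r*x + s^2)
      = (R - r) * (\<rho>^2 * k * C1 + 2 * x * C2 - s^2 * C3)"
    unfolding C1_def C2_def C3_def by (simp add: power2_eq_square algebra_simps)
  have h0: "\<rho>^2 * C1 - 2*\<rho>*C2 - k*C3 \<ge> 0"
  proof -
    have e: "\<rho>^2 * C1 - 2*\<rho>*C2 - k*C3 = (\<rho> - 1) * ((\<rho> + 1) * C1 - 2 * C2)"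
      unfolding C1_def C2_def C3_def by (simp add: power2_eq_square algebra_simps)
    have "(\<rho> + 1) * C1 \<ge> 2 * C1" using C1C2 C2p assms by (intro mult_right_mono) auto
    then have "(\<rho> + 1) * C1 - 2 * C2 \<ge> 0" using C1C2 by linarith
    then show ?thesis unfolding e using assms by simp
  qed
  have C3p: "C3 > 0" unfolding C3_def using assms by simp
  have i1: "\<rho>^2 * k * C1 + 2 * x * C2 - s^2 * C3 \<ge> \<rho>^2 * k * C1 - 2 * \<rho> * s * C2 - s^2 * C3"
  proof -
    have "(- \<rho> * s) * C2 \<le> x * C2" using assms C2p by (intro mult_right_mono) auto
    then show ?thesis by (simp add: algebra_simps)
  qed
  have i2: "\<rho>^2 * k * C1 - 2 * \<rho> * s * C2 - s^2 * C3 > \<rho>^2 * k * C1 - 2 * \<rho> * k * C2 - k^2 * C3"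
  proof -
    have "\<rho> * s * C2 < \<rho> * k * C2" using assms C2p by simp
    moreover have "s^2 * C3 \<le> k^2 * C3" using assms C3p by (intro mult_right_mono power_mono) auto
    ultimately show ?thesis by linarith
  qed
  have i3: "\<rho>^2 * k * C1 - 2 * \<rho> * k * C2 - k^2 * C3 = k * (\<rho>^2 * C1 - 2*\<rho>*C2 - k*C3)"
    by (simp add: power2_eq_square algebra_simps)
  have i4: "k * (\<rho>^2 * C1 - 2*\<rho>*C2 - k*C3) \<ge> 0" using h0 assms by simp
  have "\<rho>^2 * k * C1 + 2 * x * C2 - s^2 * C3 > 0" using i1 i2 i3 i4 by linarith
  then show ?thesis unfolding id using assms by simp
qed

lemma ratio_factor:
  fixes w a :: complex and R r k :: real
  assumes "R > r" "r \<ge> k" "k > 0" "cmod a < k" "cmod w \<ge> 1"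
  shows "(R+k)/(r+k) * cmod (of_real r * w - a) < cmod (of_real R * w - a)"
proof -
  define x where "x = Re w * Re a + Im w * Im a"
  have cs0: "(cmod w * cmod a)^2 - x^2 = (Re w * Im a - Im w * Re a)^2"
    unfolding x_def power_mult_distrib cmod_power2
    by (simp add: power2_eq_square algebra_simps)
  have cs: "x^2 \<le> (cmod w * cmod a)^2" using cs0 zero_le_power2[of "Re w * Im a - Im w * Re a"] by linarith
  have "\<bar>x\<bar> \<le> cmod w * cmod a" using cs by (intro power2_le_imp_le[of "\<bar>x\<bar>"]) auto
  hence xl: "x \<ge> - cmod w * cmod a" by linarith
  have e1: "(cmod (of_real R * w - a))^2 = R^2*(cmod w)^2 - 2*R*x + (cmod a)^2" for R
    unfolding x_def cmod_power2 by (simp add: power2_eq_square algebra_simps)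
  have "(r+k)^2 * (R^2*(cmod w)^2 - 2*R*x + (cmod a)^2) - (R+k)^2 * (r^2*(cmod w)^2 - 2*r*x + (cmod a)^2) > 0"
    by (rule ratio_factor_real) (use assms xl in auto)
  hence "((R+k) * cmod (of_real r * w - a))^2 < ((r+k) * cmod (of_real R * w - a))^2"
    unfolding power_mult_distrib e1 by simp
  hence "(R+k) * cmod (of_real r * w - a) < (r+k) * cmod (of_real R * w - a)"
    by (rule power2_less_imp_less) (use assms in simp)
  then show ?thesis using assms by (simp add: field_simps)
qed

lemma Z2:
  fixes F :: "complex poly" and \<Phi> :: complex
  assumes dF: "degree F = n" and n: "n \<ge> 1"
    and rt: "\<And>w. poly F w = 0 \<Longrightarrow> cmod w < k"
    and k: "k > 0" and Rr: "R > r" "r \<ge> k"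
    and Ph: "cmod \<Phi> \<le> ((R+k)/(r+k))^n"
  defines "G \<equiv> F \<circ>\<^sub>p [:0, of_real R:] + smult \<Phi> (F \<circ>\<^sub>p [:0, of_real r:])"
  shows "degree G = n" and "\<And>w. poly G w = 0 \<Longrightarrow> cmod w < 1"
proof -
  define q where "q = (R+k)/(r+k)"
  have q0: "q > 0" unfolding q_def using k Rr by simp
  have qr: "q * r < R" unfolding q_def using k Rr by (simp add: field_simps)
  have F0: "F \<noteq> 0" using dF n by auto
  have cG: "coeff G i = coeff F i * (of_real R ^ i + \<Phi> * of_real r ^ i)" for i
    unfolding G_def by (simp add: coeff_pcompose_linear algebra_simps)
  have "(q * r)^n < R^n" using qr q0 Rr k n by (intro power_strict_mono) auto
  moreover have "cmod \<Phi> * r^n \<le> q^n * r^n" using Ph q_def Rr k by (intro mult_right_mono) auto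
  ultimately have "cmod \<Phi> * r^n < R^n" by (simp add: power_mult_distrib)
  hence "cmod (\<Phi> * of_real r ^ n) < cmod (of_real R ^ n :: complex)"
    using Rr k by (simp add: norm_mult norm_power)
  hence ne: "(of_real R ^ n + \<Phi> * of_real r ^ n :: complex) \<noteq> 0"
    by (metis add.commute add_eq_0_iff norm_minus_cancel order_less_irrefl)
  show "degree G = n"
  proof (rule antisym)
    show "degree G \<le> n" by (rule degree_le) (simp add: cG dF coeff_eq_0)
    have "coeff F n \<noteq> 0" using F0 dF[symmetric] by simp
    then have "coeff G n \<noteq> 0" using ne by (simp add: cG)
    then show "n \<le> degree G" by (rule le_degree)
  qed
  fix w assume G0: "poly G w = 0"
  show "cmod w < 1"
  proof (rule ccontr)
    assume "\<not> cmod w < 1"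
    hence w: "cmod w \<ge> 1" by simp
    define A where "A = proots F"
    have rA: "cmod a < k" if "a \<in># A" for a using rt that F0 unfolding A_def by simp
    have sA: "size A = n" unfolding A_def using dF by (simp add: size_proots_complex)
    have pF: "poly F x = lead_coeff F * (\<Prod>a\<in>#A. (x - a))" for x
      unfolding A_def by (rule poly_decomp[OF F0])
    have lc: "lead_coeff F \<noteq> 0" using F0 by simp
    have "(\<Prod>a\<in>#A. q * cmod (of_real r * w - a)) < (\<Prod>a\<in>#A. cmod (of_real R * w - a))"
    proof (rule prod_mset_mono_less)
      show "A \<noteq> {#}" using sA n by auto
      fix a assume a: "a \<in># A"
      have "cmod (of_real r * w - a) \<ge> cmod (of_real r * w) - cmod a" by (rule norm_triangle_ineq2)
      moreover have "cmod (of_real r * w) \<ge> r" using w Rr k by (simp add: norm_mult)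
      ultimately have pos: "cmod (of_real r * w - a) > 0" using rA[OF a] Rr by linarith
      show "0 < q * cmod (of_real r * w - a) \<and> q * cmod (of_real r * w - a) < cmod (of_real R * w - a)"
      proof
        show "0 < q * cmod (of_real r * w - a)" by (rule mult_pos_pos[OF q0 pos])
        show "q * cmod (of_real r * w - a) < cmod (of_real R * w - a)"
          unfolding q_def by (rule ratio_factor[OF Rr k rA[OF a] w])
      qed
    qed
    hence "q^n * (\<Prod>a\<in>#A. cmod (of_real r * w - a)) < (\<Prod>a\<in>#A. cmod (of_real R * w - a))"
      by (simp add: prod_mset.distrib sA)
    hence "cmod (lead_coeff F) * (q^n * (\<Prod>a\<in>#A. cmod (of_real r * w - a))) < cmod (lead_coeff F) * (\<Prod>a\<in>#A. cmod (of_real R * w - a))"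
      using lc by simp
    hence lt: "q^n * cmod (poly F (of_real r * w)) < cmod (poly F (of_real R * w))"
      unfolding pF by (simp add: norm_mult norm_prod_mset_c mult_ac)
    have "cmod (\<Phi> * poly F (of_real r * w)) \<le> q^n * cmod (poly F (of_real r * w))"
      unfolding norm_mult using Ph q_def by (intro mult_right_mono) auto
    hence "cmod (\<Phi> * poly F (of_real r * w)) < cmod (poly F (of_real R * w))" using lt by linarith
    moreover have "poly G w = poly F (of_real R * w) + \<Phi> * poly F (of_real r * w)"
      unfolding G_def by (simp add: poly_pcompose mult_ac)
    ultimately show False using G0
      by (metis add.commute add_eq_0_iff norm_minus_cancel order_less_irrefl)
  qed
qed

section \<open>Laguerre\<close>

lemma norm_sum_mset_le: "cmod (\<Sum>a\<in>#A. f a) \<le> (\<Sum>a\<in>#A. cmod (f a))"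
proof (induction A)
  case (add x A)
  have "cmod (f x + (\<Sum>a\<in>#A. f a)) \<le> cmod (f x) + cmod (\<Sum>a\<in>#A. f a)" by (rule norm_triangle_ineq)
  then show ?case using add by simp
qed simp

lemma cs_mset_real:
  fixes g :: "'a \<Rightarrow> real"
  shows "(\<Sum>a\<in>#A. g a)^2 \<le> real (size A) * (\<Sum>a\<in>#A. (g a)^2)"
proof (induction A)
  case (add x A)
  have "(\<Sum>a\<in>#A. 2 * g x * g a) \<le> (\<Sum>a\<in>#A. (g x)^2 + (g a)^2)"
    by (rule sum_mset_mono) (rule sum_squares_bound)
  hence h: "2 * g x * (\<Sum>a\<in>#A. g a) \<le> real (size A) * (g x)^2 + (\<Sum>a\<in>#A. (g a)^2)"
    by (simp add: sum_mset.distrib sum_mset_distrib_left mult.assoc)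
  show ?case using add h by (simp add: power2_eq_square algebra_simps)
qed simp

lemma cs_mset:
  fixes f :: "'a \<Rightarrow> complex"
  shows "(cmod (\<Sum>a\<in>#A. f a))^2 \<le> real (size A) * (\<Sum>a\<in>#A. (cmod (f a))^2)"
proof -
  have "(cmod (\<Sum>a\<in>#A. f a))^2 \<le> (\<Sum>a\<in>#A. cmod (f a))^2"
    by (rule power_mono[OF norm_sum_mset_le]) simp
  also have "\<dots> \<le> real (size A) * (\<Sum>a\<in>#A. (cmod (f a))^2)" by (rule cs_mset_real)
  finally show ?thesis .
qed

lemma sum_mset_Re: "Re (\<Sum>a\<in>#A. f a) = (\<Sum>a\<in>#A. Re (f a))"
  by (induction A) auto

lemma sum_phi_mset:
  fixes c :: real and x :: complex
  shows "(\<Sum>a\<in>#B. c * g a - 2 * Re (x * y a) + 1) = c * (\<Sum>a\<in>#B. g a) - 2 * Re (x * (\<Sum>a\<in>#B. y a)) + real (size B)"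
  by (induction B) (simp_all add: algebra_simps)

lemma sum_mset_minus1: "(\<Sum>a\<in>#B. (f a :: real) - 1) = (\<Sum>a\<in>#B. f a) - real (size B)"
  by (induction B) (simp_all add: algebra_simps)

lemma sum_mset_neg:
  fixes f :: "'a \<Rightarrow> real"
  assumes "A \<noteq> {#}" "\<And>a. a \<in># A \<Longrightarrow> f a < 0"
  shows "(\<Sum>a\<in>#A. f a) < 0"
  using assms
proof (induction A)
  case (add x A)
  then show ?case
    by (cases "A = {#}") (auto intro: add_neg_neg)
qed simp

lemma logderiv:
  fixes A :: "complex multiset"
  assumes "x \<notin># A"
  shows "poly (pderiv (\<Prod>a\<in>#A. [:-a,1:])) x = poly (\<Prod>a\<in>#A. [:-a,1:]) x * (\<Sum>a\<in>#A. 1 / (x - a))"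
  using assms
proof (induction A)
  case (add b A)
  have xb: "x - b \<noteq> 0" using add.prems by auto
  have IH: "poly (pderiv (\<Prod>a\<in>#A. [:-a,1:])) x = poly (\<Prod>a\<in>#A. [:-a,1:]) x * (\<Sum>a\<in>#A. 1 / (x - a))"
    using add by auto
  define P where "P = (\<Prod>a\<in>#A. [:-a,1:])"
  have e: "(\<Prod>a\<in>#add_mset b A. [:-a,1:]) = [:-b,1:] * P" by (simp add: P_def)
  have "poly (pderiv ([:-b,1:] * P)) x = (x - b) * poly (pderiv P) x + poly P x"
    by (simp add: pderiv_pCons pderiv_diff pderiv_smult algebra_simps)
  note D = this
  have r: "poly ([:-b,1:] * P) x = (x - b) * poly P x" by (simp only: poly_mult) simp
  show ?case unfolding e D r sum_mset.add_mset IH[folded P_def] using xb by (simp add: field_simps)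
qed simp

lemma vieta:
  fixes A :: "complex multiset"
  shows "degree (\<Prod>a\<in>#A. [:-a,1:]) \<le> size A \<and> coeff (\<Prod>a\<in>#A. [:-a,1:]) (size A) = 1 \<and>
         (size A \<ge> 1 \<longrightarrow> coeff (\<Prod>a\<in>#A. [:-a,1:]) (size A - 1) = - (\<Sum>a\<in>#A. a))"
proof (induction A)
  case (add b A)
  define P where "P = (\<Prod>a\<in>#A. [:-a,1:])"
  have eq: "(\<Prod>a\<in>#add_mset b A. [:-a,1:]) = smult (-b) P + pCons 0 P"
    by (simp add: P_def mult_pCons_left)
  have dP: "degree P \<le> size A" "coeff P (size A) = 1"
    "size A \<ge> 1 \<Longrightarrow> coeff P (size A - 1) = - (\<Sum>a\<in>#A. a)"
    using add by (auto simp: P_def)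
  have c1: "coeff P (Suc (size A)) = 0" using dP by (intro coeff_eq_0) auto
  have deg: "degree (smult (-b) P + pCons 0 P) \<le> Suc (size A)"
    using dP by (intro degree_add_le) (auto intro: order.trans[OF degree_smult_le] simp: degree_pCons_le)
  have c2: "coeff (smult (-b) P + pCons 0 P) (size A) = - b - (\<Sum>a\<in>#A. a)"
  proof (cases "size A")
    case 0 then have "A = {#}" by simp
    then show ?thesis by (simp add: P_def)
  next
    case (Suc j)
    then show ?thesis using dP by simp
  qed
  show ?case unfolding eq using deg c1 c2 dP by (simp add: algebra_simps)
qed simp

definition polar :: "nat \<Rightarrow> complex \<Rightarrow> complex \<Rightarrow> complex poly \<Rightarrow> complex poly" where
  "polar m \<zeta> \<tau> H = smult (\<tau> * of_nat m) H + [:\<zeta>, -\<tau>:] * pderiv H"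

lemma poly_polar: "poly (polar m \<zeta> \<tau> H) x = \<tau> * of_nat m * poly H x + (\<zeta> - \<tau> * x) * poly (pderiv H) x"
  by (simp add: polar_def algebra_simps)

lemma coeff_polar:
  "coeff (polar m \<zeta> \<tau> H) j = \<tau> * (of_nat m - of_nat j) * coeff H j + \<zeta> * of_nat (Suc j) * coeff H (Suc j)"
proof -
  have e: "[:\<zeta>, -\<tau>:] * pderiv H = smult \<zeta> (pderiv H) + pCons 0 (smult (-\<tau>) (pderiv H))"
    by (simp add: mult_pCons_left)
  show ?thesis unfolding polar_def e
    by (cases j) (simp_all add: coeff_pderiv algebra_simps)
qed

lemma poly_pderiv_polar:
  "poly (pderiv (polar m \<zeta> \<tau> H)) x = \<tau> * (of_nat m - 1) * poly (pderiv H) x + (\<zeta> - \<tau> * x) * poly (pderiv (pderiv H)) x"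
  by (simp add: polar_def pderiv_add pderiv_smult pderiv_mult pderiv_pCons pderiv_minus algebra_simps)

lemma laguerre:
  fixes H :: "complex poly"
  assumes dH: "degree H = m" and m: "m \<ge> 1"
    and rt: "\<And>x. poly H x = 0 \<Longrightarrow> cmod x < 1"
    and \<zeta>: "\<zeta> \<noteq> 0" "cmod \<tau> \<le> cmod \<zeta>"
  shows "\<And>x. cmod x \<ge> 1 \<Longrightarrow> poly (polar m \<zeta> \<tau> H) x \<noteq> 0"
    and "degree (polar m \<zeta> \<tau> H) = m - 1"
proof -
  have H0: "H \<noteq> 0" using dH m by auto
  define A where "A = proots H"
  define c where "c = lead_coeff H"
  define P where "P = (\<Prod>a\<in>#A. [:-a,1:])"
  have c0: "c \<noteq> 0" using H0 by (simp add: c_def)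
  have HP: "H = smult c P" unfolding c_def P_def A_def by (rule complex_poly_decompose_multiset[symmetric])
  have rA: "cmod a < 1" if "a \<in># A" for a using rt that H0 unfolding A_def by simp
  have sA: "size A = m" unfolding A_def using dH by (simp add: size_proots_complex)
  have Ane: "A \<noteq> {#}" using sA m by auto
  {
    fix x :: complex assume x: "cmod x \<ge> 1"
    have xA: "x \<notin># A" using rA x by force
    have Px: "poly P x \<noteq> 0" unfolding P_def poly_prod_mset using xA
      by (auto simp: prod_mset_zero_iff)
    define S where "S = (\<Sum>a\<in>#A. 1 / (x - a))"
    have dP: "poly (pderiv P) x = poly P x * S" unfolding P_def S_def by (rule logderiv[OF xA])
    show "poly (polar m \<zeta> \<tau> H) x \<noteq> 0"
    proof
      assume "poly (polar m \<zeta> \<tau> H) x = 0"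
      hence "c * poly P x * (\<tau> * of_nat m + (\<zeta> - \<tau> * x) * S) = 0"
        unfolding poly_polar HP by (simp add: pderiv_smult dP algebra_simps)
      hence e0: "\<tau> * of_nat m + (\<zeta> - \<tau> * x) * S = 0" using c0 Px by simp
      have "(\<tau> * x - \<zeta>) * S - \<tau> * of_nat m = - (\<tau> * of_nat m + (\<zeta> - \<tau> * x) * S)"
        by (simp add: algebra_simps)
      hence eqn: "(\<tau> * x - \<zeta>) * S = \<tau> * of_nat m" using e0 by simp
      define y where "y a = 1 / (x - a)" for a
      have ya: "cmod (x * y a - 1) < cmod (y a)" if "a \<in># A" for a
      proof -
        have xa: "x - a \<noteq> 0" using that xA by auto
        have "x * y a - 1 = a * y a" using xa by (simp add: y_def field_simps)
        moreover have "y a \<noteq> 0" using xa by (simp add: y_def)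
        ultimately show ?thesis using rA[OF that] by (simp add: norm_mult)
      qed
      define \<phi> where "\<phi> u = ((cmod x)^2 - 1) * (cmod u)^2 - 2 * Re (x * u) + 1" for u
      have \<phi>eq: "\<phi> u = (cmod (x * u - 1))^2 - (cmod u)^2" for u
        unfolding \<phi>_def cmod_power2 by (simp add: power2_eq_square algebra_simps)
      have sneg: "(\<Sum>a\<in>#A. \<phi> (y a)) < 0"
      proof (rule sum_mset_neg[OF Ane])
        fix a assume a: "a \<in># A"
        have "(cmod (x * y a - 1))^2 < (cmod (y a))^2" using ya[OF a] by (intro power_strict_mono) auto
        then show "\<phi> (y a) < 0" unfolding \<phi>eq by simp
      qed
      have SY: "S = (\<Sum>a\<in>#A. y a)" unfolding S_def y_def by simp
      have cs: "(cmod S)^2 \<le> real m * (\<Sum>a\<in>#A. (cmod (y a))^2)" unfolding SY sA[symmetric] by (rule cs_mset)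
      have x1: "(cmod x)^2 - 1 \<ge> 0" using one_le_power[OF x, of 2] by linarith
      have sumphi: "(\<Sum>a\<in>#A. \<phi> (y a)) = ((cmod x)^2 - 1) * (\<Sum>a\<in>#A. (cmod (y a))^2) - 2 * Re (x * S) + real m"
        unfolding \<phi>_def SY sum_phi_mset sA ..
      have "(cmod (x * S - of_nat m))^2 - (cmod S)^2 = ((cmod x)^2 - 1) * (cmod S)^2 - 2 * real m * Re (x * S) + (real m)^2"
        unfolding cmod_power2 by (simp add: power2_eq_square algebra_simps)
      also have "\<dots> \<le> ((cmod x)^2 - 1) * (real m * (\<Sum>a\<in>#A. (cmod (y a))^2)) - 2 * real m * Re (x * S) + (real m)^2"
        using cs x1 by (simp add: mult_left_mono)
      also have "\<dots> = real m * (\<Sum>a\<in>#A. \<phi> (y a))" unfolding sumphi by (simp add: algebra_simps power2_eq_square)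
      also have "\<dots> < 0" using sneg m by (simp add: mult_pos_neg)
      finally have "(cmod (x * S - of_nat m))^2 < (cmod S)^2" by linarith
      hence lt: "cmod (x * S - of_nat m) < cmod S" by (rule power2_less_imp_less) simp
      have "(\<tau> * x - \<zeta>) * (x * S - of_nat m) = x * ((\<tau> * x - \<zeta>) * S) - of_nat m * (\<tau> * x - \<zeta>)"
        by (simp add: algebra_simps)
      also have "\<dots> = x * (\<tau> * of_nat m) - of_nat m * (\<tau> * x - \<zeta>)" by (simp only: eqn)
      also have "\<dots> = of_nat m * \<zeta>" by (simp add: algebra_simps)
      finally have key: "(\<tau> * x - \<zeta>) * (x * S - of_nat m) = of_nat m * \<zeta>" .
      show False
      proof (cases "\<tau> * x - \<zeta> = 0")
        case True then show False using key \<zeta> m by simp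
      next
        case False
        have "real m * cmod \<zeta> = cmod (\<tau> * x - \<zeta>) * cmod (x * S - of_nat m)"
          using arg_cong[OF key, of cmod] by (simp add: norm_mult)
        also have "\<dots> < cmod (\<tau> * x - \<zeta>) * cmod S" using lt False by simp
        also have "\<dots> = real m * cmod \<tau>" using arg_cong[OF eqn, of cmod] by (simp add: norm_mult)
        moreover have "real m * cmod \<tau> \<le> real m * cmod \<zeta>" using \<zeta> by (intro mult_left_mono) auto
        ultimately show False by linarith
      qed
    qed
  }
  have vi: "degree P \<le> m" "coeff P m = 1" "coeff P (m - 1) = - (\<Sum>a\<in>#A. a)"
    using vieta[of A] sA m by (auto simp: P_def)
  have cH: "coeff H j = c * coeff P j" for j by (simp add: HP)
  show "degree (polar m \<zeta> \<tau> H) = m - 1"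
  proof (rule antisym)
    show "degree (polar m \<zeta> \<tau> H) \<le> m - 1"
    proof (rule degree_le, intro allI impI)
      fix j assume j: "m - 1 < j"
      have "coeff H (Suc j) = 0" using dH j by (intro coeff_eq_0) auto
      moreover have "(of_nat m - of_nat j) * coeff H j = (0::complex)"
      proof (cases "j = m")
        case False then have "coeff H j = 0" using dH j by (intro coeff_eq_0) auto
        then show ?thesis by simp
      qed simp
      ultimately show "coeff (polar m \<zeta> \<tau> H) j = 0" by (simp add: coeff_polar)
    qed
    have sa: "cmod (\<Sum>a\<in>#A. a) < real m"
    proof -
      have "cmod (\<Sum>a\<in>#A. a) \<le> (\<Sum>a\<in>#A. cmod a)" using norm_sum_mset_le[of "\<lambda>a. a"] by simp
      also have "(\<Sum>a\<in>#A. cmod a - 1) < 0" by (rule sum_mset_neg[OF Ane]) (use rA in auto)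
      hence "(\<Sum>a\<in>#A. cmod a) < real m" by (simp add: sum_mset_minus1 sA)
      finally show ?thesis .
    qed
    have "coeff (polar m \<zeta> \<tau> H) (m - 1) = c * (of_nat m * \<zeta> - \<tau> * (\<Sum>a\<in>#A. a))"
      using m vi by (simp add: coeff_polar cH of_nat_diff algebra_simps)
    moreover have "of_nat m * \<zeta> - \<tau> * (\<Sum>a\<in>#A. a) \<noteq> 0"
    proof
      assume "of_nat m * \<zeta> - \<tau> * (\<Sum>a\<in>#A. a) = 0"
      hence e: "cmod (of_nat m * \<zeta>) = cmod \<tau> * cmod (\<Sum>a\<in>#A. a)" by (simp add: norm_mult)
      have "cmod \<tau> * cmod (\<Sum>a\<in>#A. a) \<le> cmod \<zeta> * cmod (\<Sum>a\<in>#A. a)" using \<zeta> by (simp add: mult_right_mono)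
      also have "\<dots> < cmod \<zeta> * real m" using sa \<zeta> by simp
      finally show False using e by (simp add: norm_mult mult.commute)
    qed
    ultimately have "coeff (polar m \<zeta> \<tau> H) (m - 1) \<noteq> 0" using c0 by simp
    then show "m - 1 \<le> degree (polar m \<zeta> \<tau> H)" by (rule le_degree)
  qed
qed

section \<open>The operator B\<close>

lemma Bop_add: "Bop l0 l1 l2 n (p + q) z = Bop l0 l1 l2 n p z + Bop l0 l1 l2 n q z"
  by (simp add: Bop_def pderiv_add algebra_simps add_divide_distrib)

lemma Bop_smult: "Bop l0 l1 l2 n (smult c p) z = c * Bop l0 l1 l2 n p z"
  by (simp add: Bop_def pderiv_smult algebra_simps)

lemma Bop_diff: "Bop l0 l1 l2 n (p - q) z = Bop l0 l1 l2 n p z - Bop l0 l1 l2 n q z"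
  by (simp add: Bop_def pderiv_diff algebra_simps diff_divide_distrib)

lemma Bop_const: "Bop l0 l1 l2 n [:c:] z = l0 * c"
  by (simp add: Bop_def)

lemma U_nonzero:
  assumes n: "n \<ge> 1" and U: "\<forall>w. Upoly l0 l1 l2 n w = 0 \<longrightarrow> cmod w \<le> cmod (w - of_nat n / 2)"
  shows "\<not> (l0 = 0 \<and> of_nat n * l1 = 0 \<and> of_nat (n * (n - 1)) / 2 * l2 = 0)"
proof
  assume h: "l0 = 0 \<and> of_nat n * l1 = 0 \<and> of_nat (n * (n - 1)) / 2 * l2 = 0"
  have h1: "l0 = 0" and h2: "of_nat n * l1 = 0" and h3: "of_nat (n * (n - 1)) / 2 * l2 = 0" using h by auto
  have "Upoly l0 l1 l2 n (of_nat n) = 0" unfolding Upoly_def h1 h2 h3 by simp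
  hence "cmod (of_nat n :: complex) \<le> cmod (of_nat n - of_nat n / 2 :: complex)" using U by blast
  also have "(of_nat n - of_nat n / 2 :: complex) = of_real (real n / 2)" by simp
  finally have "real n \<le> real n / 2" by simp
  then show False using n by simp
qed

lemma lin_form:
  assumes U: "\<forall>w. Upoly l0 l1 l2 n w = 0 \<longrightarrow> cmod w \<le> cmod (w - of_nat n / 2)"
    and ab: "a \<noteq> 0 \<or> b \<noteq> 0" and root: "b \<noteq> 0 \<Longrightarrow> Upoly l0 l1 l2 n (- a / b) = 0"
    and n1: "n \<ge> 1"
  shows "cmod a \<le> cmod (a + of_nat n / 2 * b)" and "a + of_nat n / 2 * b \<noteq> 0"
proof -
  show le: "cmod a \<le> cmod (a + of_nat n / 2 * b)"
  proof (cases "b = 0")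
    case False
    have "cmod (- a / b) \<le> cmod (- a / b - of_nat n / 2)" using U root[OF False] by blast
    hence "cmod b * cmod (- a / b) \<le> cmod b * cmod (- a / b - of_nat n / 2)" by (rule mult_left_mono) simp
    also have "cmod b * cmod (- a / b - of_nat n / 2) = cmod (b * (- a / b - of_nat n / 2))" by (simp add: norm_mult)
    also have "b * (- a / b - of_nat n / 2) = - (a + of_nat n / 2 * b)" using False by (simp add: field_simps)
    finally have X: "cmod b * cmod (- a / b) \<le> cmod (- (a + of_nat n / 2 * b))" .
    have "cmod b * cmod (- a / b) = cmod a" using False by (simp add: norm_divide)
    then show ?thesis using X by (simp only: norm_minus_cancel)
  qed simp
  show "a + of_nat n / 2 * b \<noteq> 0"
  proof
    assume h: "a + of_nat n / 2 * b = 0"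
    hence "a = 0" using le by simp
    hence "b = 0 \<or> n = 0" using h by auto
    then show False using ab \<open>a = 0\<close> n1 by auto
  qed
qed

lemma quad_factor:
  fixes A B C :: complex
  assumes "\<not> (C = 0 \<and> B = 0 \<and> A = 0)"
  shows "\<exists>\<kappa> a1 b1 a2 b2. \<kappa> \<noteq> 0 \<and> C = \<kappa> * a1 * a2 \<and> B = \<kappa> * (a1 * b2 + a2 * b1) \<and> A = \<kappa> * b1 * b2
           \<and> (a1 \<noteq> 0 \<or> b1 \<noteq> 0) \<and> (a2 \<noteq> 0 \<or> b2 \<noteq> 0)"
proof (cases "A = 0")
  case False
  define s where "s = csqrt (B^2 - 4 * A * C)"
  have s2: "s^2 = B^2 - 4 * A * C" unfolding s_def by simp
  define w1 where "w1 = (- B + s) / (2 * A)"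
  define w2 where "w2 = (- B - s) / (2 * A)"
  have "A * (- w1) * (- w2) = C"
    unfolding w1_def w2_def using False s2 by (simp add: field_simps power2_eq_square) algebra
  moreover have "A * ((- w1) * 1 + (- w2) * 1) = B" unfolding w1_def w2_def using False by (simp add: field_simps)
  ultimately show ?thesis using False by (intro exI[of _ A] exI[of _ "- w1"] exI[of _ 1] exI[of _ "- w2"] exI[of _ 1]) auto
next
  case True
  show ?thesis
  proof (cases "B = 0")
    case False
    then show ?thesis using True by (intro exI[of _ 1] exI[of _ 1] exI[of _ 0] exI[of _ C] exI[of _ B]) auto
  next
    case B: True
    then have "C \<noteq> 0" using assms True by auto
    then show ?thesis using True B by (intro exI[of _ 1] exI[of _ 1] exI[of _ 0] exI[of _ C] exI[of _ 0]) auto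
  qed
qed

lemma pderiv_pderiv_deg1:
  fixes G :: "complex poly"
  assumes "degree G = 1"
  shows "pderiv (pderiv G) = 0"
  using assms by (simp add: pderiv_eq_0_iff degree_pderiv)

lemma Z3:
  fixes G :: "complex poly"
  assumes n: "n \<ge> 1" and dG: "degree G = n" and rt: "\<And>w. poly G w = 0 \<Longrightarrow> cmod w < 1"
    and U: "\<forall>w. Upoly l0 l1 l2 n w = 0 \<longrightarrow> cmod w \<le> cmod (w - of_nat n / 2)"
    and z: "cmod z \<ge> 1"
  shows "Bop l0 l1 l2 n G z \<noteq> 0"
proof -
  have z0: "z \<noteq> 0" using z by auto
  define Cc where "Cc = l0"
  define Bc where "Bc = of_nat n * l1"
  define Ac where "Ac = of_nat (n * (n - 1)) / 2 * l2"
  have Up: "Upoly l0 l1 l2 n w = Cc + Bc * w + Ac * w^2" for w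
    unfolding Upoly_def Cc_def Bc_def Ac_def by simp
  have nz: "\<not> (Cc = 0 \<and> Bc = 0 \<and> Ac = 0)" using U_nonzero[OF n U] unfolding Cc_def Bc_def Ac_def by simp
  show ?thesis
  proof (cases "n = 1")
    case True
    have Ac0: "Ac = 0" unfolding Ac_def using True by simp
    have ab: "l0 \<noteq> 0 \<or> l1 \<noteq> 0" using nz Ac0 True unfolding Cc_def Bc_def by auto
    have rootc: "Upoly l0 l1 l2 n (- l0 / l1) = 0" if "l1 \<noteq> 0" using that True
      unfolding Up Ac0 Cc_def Bc_def by (simp add: field_simps)
    define \<sigma> where "\<sigma> = l0 + of_nat n / 2 * l1"
    have s1: "cmod l0 \<le> cmod \<sigma>" and s2: "\<sigma> \<noteq> 0"
      using lin_form[OF U ab rootc n] unfolding \<sigma>_def by auto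
    have "cmod \<sigma> \<le> cmod (z * \<sigma>)" using z by (simp add: norm_mult mult_le_cancel_right1)
    hence zs: "cmod l0 \<le> cmod (z * \<sigma>)" using s1 by linarith
    have "poly (polar 1 (z * \<sigma>) l0 G) z \<noteq> 0"
      using laguerre(1)[of G 1 "z * \<sigma>" l0 z] dG True rt s2 z0 zs z by auto
    moreover have "Bop l0 l1 l2 n G z = poly (polar 1 (z * \<sigma>) l0 G) z"
      using True dG by (simp add: Bop_def poly_polar pderiv_pderiv_deg1 \<sigma>_def algebra_simps)
    ultimately show ?thesis by simp
  next
    case False
    hence n2: "n \<ge> 2" using n by simp
    obtain \<kappa> a1 b1 a2 b2 where k0: "\<kappa> \<noteq> 0" and eC: "Cc = \<kappa> * a1 * a2" and eB: "Bc = \<kappa> * (a1 * b2 + a2 * b1)"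
      and eA: "Ac = \<kappa> * b1 * b2" and ab1: "a1 \<noteq> 0 \<or> b1 \<noteq> 0" and ab2: "a2 \<noteq> 0 \<or> b2 \<noteq> 0"
      using quad_factor[OF nz] by blast
    have Ufac: "Upoly l0 l1 l2 n w = \<kappa> * (a1 + b1 * w) * (a2 + b2 * w)" for w
      unfolding Up eA eB eC by (simp add: algebra_simps power2_eq_square)
    have r1: "Upoly l0 l1 l2 n (- a1 / b1) = 0" if "b1 \<noteq> 0" using that unfolding Ufac by simp
    have r2: "Upoly l0 l1 l2 n (- a2 / b2) = 0" if "b2 \<noteq> 0" using that unfolding Ufac by simp
    define \<sigma>1 where "\<sigma>1 = a1 + of_nat n / 2 * b1"
    define \<sigma>2 where "\<sigma>2 = a2 + of_nat n / 2 * b2"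
    have s11: "cmod a1 \<le> cmod \<sigma>1" and s12: "\<sigma>1 \<noteq> 0"
      using lin_form[OF U ab1 r1 n] unfolding \<sigma>1_def by auto
    have s21: "cmod a2 \<le> cmod \<sigma>2" and s22: "\<sigma>2 \<noteq> 0"
      using lin_form[OF U ab2 r2 n] unfolding \<sigma>2_def by auto
    have "cmod \<sigma>1 \<le> cmod (z * \<sigma>1)" "cmod \<sigma>2 \<le> cmod (z * \<sigma>2)"
      using z by (simp_all add: norm_mult mult_le_cancel_right1)
    hence zs1: "cmod a1 \<le> cmod (z * \<sigma>1)" and zs2: "cmod a2 \<le> cmod (z * \<sigma>2)" using s11 s21 by linarith+
    define H1 where "H1 = polar n (z * \<sigma>1) a1 G"
    have L1: "\<And>x. cmod x \<ge> 1 \<Longrightarrow> poly H1 x \<noteq> 0" "degree H1 = n - 1"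
      using laguerre[of G n "z * \<sigma>1" a1] dG n rt s12 z0 zs1 unfolding H1_def by auto
    have rt1: "cmod x < 1" if "poly H1 x = 0" for x using L1(1)[of x] that by force
    have "poly (polar (n - 1) (z * \<sigma>2) a2 H1) z \<noteq> 0"
      using laguerre(1)[of H1 "n - 1" "z * \<sigma>2" a2 z] L1(2) n2 rt1 s22 z0 zs2 z by auto
    moreover have "Bop l0 l1 l2 n G z = \<kappa> / (of_nat n * (of_nat n - 1)) * poly (polar (n - 1) (z * \<sigma>2) a2 H1) z"
    proof -
      define N where "N = (of_nat n :: complex)"
      have N0: "N \<noteq> 0" and N1: "N - 1 \<noteq> 0" using n2 by (auto simp: N_def)
      have nm1: "(of_nat (n - 1) :: complex) = N - 1" using n by (simp add: N_def of_nat_diff)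
      have hl0: "l0 = \<kappa> * a1 * a2" using eC by (simp add: Cc_def)
      have hl1: "l1 = \<kappa> * (a1 * b2 + a2 * b1) / N" using eB N0 by (simp add: Bc_def N_def field_simps)
      have hl2: "l2 = 2 * \<kappa> * b1 * b2 / (N * (N - 1))" using eA N0 N1 n
        by (simp add: Ac_def N_def field_simps of_nat_diff)
      show ?thesis
        unfolding H1_def poly_polar poly_pderiv_polar Bop_def hl0 hl1 hl2 nm1 \<sigma>1_def \<sigma>2_def N_def[symmetric]
        using N0 N1 by (simp add: field_simps) (simp add: algebra_simps power2_eq_square)
    qed
    moreover have "(of_nat n :: complex) * (of_nat n - 1) \<noteq> 0" using n2 by simp
    ultimately show ?thesis using k0 by simp
  qed
qed



definition LL :: "complex \<Rightarrow> complex \<Rightarrow> complex \<Rightarrow> nat \<Rightarrow> real \<Rightarrow> real \<Rightarrow> complex \<Rightarrow> complex \<Rightarrow> complex poly \<Rightarrow> complex" where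
  "LL l0 l1 l2 n R r \<Phi> z f = Bop l0 l1 l2 n (f \<circ>\<^sub>p [:0, of_real R:]) z + \<Phi> * Bop l0 l1 l2 n (f \<circ>\<^sub>p [:0, of_real r:]) z"

lemma LL_diff: "LL l0 l1 l2 n R r \<Phi> z (p - q) = LL l0 l1 l2 n R r \<Phi> z p - LL l0 l1 l2 n R r \<Phi> z q"
  by (simp add: LL_def pcompose_diff Bop_diff algebra_simps)

lemma LL_smult: "LL l0 l1 l2 n R r \<Phi> z (smult c p) = c * LL l0 l1 l2 n R r \<Phi> z p"
  by (simp add: LL_def pcompose_smult Bop_smult algebra_simps)

lemma LL_const: "LL l0 l1 l2 n R r \<Phi> z [:c:] = l0 * c * (1 + \<Phi>)"
  by (simp add: LL_def Bop_const algebra_simps)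

lemma monom_pcompose_lin: "monom (1::complex) n \<circ>\<^sub>p [:0, a:] = smult (a ^ n) (monom 1 n)"
  by (rule poly_eqI) (simp add: coeff_pcompose_linear coeff_monom)

lemma LL_monom: "LL l0 l1 l2 n R r \<Phi> z (monom 1 n) = (of_real (R^n) + of_real (r^n) * \<Phi>) * Bop l0 l1 l2 n (monom 1 n) z"
  by (simp add: LL_def monom_pcompose_lin Bop_smult algebra_simps)

lemma Z:
  fixes F :: "complex poly"
  assumes n: "n \<ge> 1" and dF: "degree F = n" and rt: "\<And>w. poly F w = 0 \<Longrightarrow> cmod w < k"
    and k: "k > 0" and Rr: "R > r" "r \<ge> k" and Ph: "cmod \<Phi> \<le> ((R+k)/(r+k))^n"
    and U: "\<forall>w. Upoly l0 l1 l2 n w = 0 \<longrightarrow> cmod w \<le> cmod (w - of_nat n / 2)"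
    and z: "cmod z \<ge> 1"
  shows "LL l0 l1 l2 n R r \<Phi> z F \<noteq> 0"
proof -
  define G where "G = F \<circ>\<^sub>p [:0, of_real R:] + smult \<Phi> (F \<circ>\<^sub>p [:0, of_real r:])"
  have "LL l0 l1 l2 n R r \<Phi> z F = Bop l0 l1 l2 n G z"
    by (simp add: LL_def G_def Bop_add Bop_smult)
  moreover have "degree G = n" "\<And>w. poly G w = 0 \<Longrightarrow> cmod w < 1"
    using Z2[OF dF n rt k Rr Ph] unfolding G_def by auto
  ultimately show ?thesis using Z3[OF n _ _ U z] by auto
qed

lemma Dom:
  fixes f F :: "complex poly"
  assumes n: "n \<ge> 1" and k: "k > 0" and Rr: "R > r" "r \<ge> k" and Ph: "cmod \<Phi> \<le> ((R+k)/(r+k))^n"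
    and U: "\<forall>w. Upoly l0 l1 l2 n w = 0 \<longrightarrow> cmod w \<le> cmod (w - of_nat n / 2)"
    and z: "cmod z \<ge> 1"
    and df: "degree f \<le> n" and dF: "degree F = n" and rt: "\<And>w. poly F w = 0 \<Longrightarrow> cmod w < k"
    and dom: "\<And>w. cmod w \<ge> k \<Longrightarrow> cmod (poly f w) \<le> cmod (poly F w)"
    and cf: "cmod (coeff f n) \<le> cmod (coeff F n)"
  shows "cmod (LL l0 l1 l2 n R r \<Phi> z f) \<le> cmod (LL l0 l1 l2 n R r \<Phi> z F)"
proof (rule ccontr)
  let ?L = "LL l0 l1 l2 n R r \<Phi> z"
  assume "\<not> ?thesis"
  hence lt: "cmod (?L F) < cmod (?L f)" by simp
  have LF: "?L F \<noteq> 0" by (rule Z[OF n dF rt k Rr Ph U z])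
  define \<mu> where "\<mu> = ?L f / ?L F"
  have mu1: "cmod \<mu> > 1" using lt LF by (simp add: \<mu>_def norm_divide)
  define F' where "F' = f - smult \<mu> F"
  have Fn: "coeff F n \<noteq> 0" using dF n by (metis leading_coeff_0_iff degree_0 not_one_le_zero)
  have "cmod (coeff F n) < cmod \<mu> * cmod (coeff F n)" using mu1 Fn by simp
  hence "cmod (coeff f n) < cmod (\<mu> * coeff F n)" using cf by (simp add: norm_mult)
  hence cF': "coeff F' n \<noteq> 0" unfolding F'_def by auto
  have dF': "degree F' = n"
  proof (rule antisym)
    show "degree F' \<le> n" unfolding F'_def using df dF
      by (intro degree_diff_le) (auto intro: order.trans[OF degree_smult_le])
    show "n \<le> degree F'" using cF' by (rule le_degree)
  qed
  have rt': "cmod w < k" if "poly F' w = 0" for w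
  proof (rule ccontr)
    assume "\<not> cmod w < k"
    hence w: "cmod w \<ge> k" by simp
    have "poly f w = \<mu> * poly F w" using that unfolding F'_def by simp
    moreover have "poly F w \<noteq> 0" using rt w by force
    ultimately have "cmod (poly F w) < cmod (poly f w)" using mu1 by (simp add: norm_mult)
    then show False using dom[OF w] by simp
  qed
  have "?L F' \<noteq> 0" by (rule Z[OF n dF' rt' k Rr Ph U z])
  moreover have "?L F' = 0" using LF unfolding F'_def LL_diff LL_smult \<mu>_def by simp
  ultimately show False by simp
qed


lemma lin_pcomp: "[:0, a:] \<circ>\<^sub>p [:0, b:] = [:0, a * (b::complex):]"
  by (simp add: pcompose_pCons)

lemma reflect_conj_0: "reflect_conj n 0 = 0"
  by (rule poly_eqI) (simp add: coeff_reflect_conj)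

theorem lemma1p4:
  fixes n :: nat and k R r :: real and l0 l1 l2 \<alpha> \<beta> z :: complex and P :: "complex poly"
  assumes n: "n \<ge> 1"
    and U: "\<forall>w. Upoly l0 l1 l2 n w = 0 \<longrightarrow> cmod w \<le> cmod (w - of_nat n / 2)"
    and k: "0 < k" "k \<le> 1"
    and P: "degree P \<le> n"
    and a: "cmod \<alpha> \<le> 1" and b: "cmod \<beta> \<le> 1"
    and Rr: "R > r" "r \<ge> k"
    and z: "cmod z \<ge> 1"
  shows "cmod (Bop l0 l1 l2 n (P \<circ>\<^sub>p [:0, of_real R:]) z
               + Phi n k R r \<alpha> \<beta> * Bop l0 l1 l2 n (P \<circ>\<^sub>p [:0, of_real r:]) z)
         + k^n * cmod (Bop l0 l1 l2 n (reflect_conj n P \<circ>\<^sub>p [:0, of_real (R / k^2):]) z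
               + Phi n k R r \<alpha> \<beta> * Bop l0 l1 l2 n (reflect_conj n P \<circ>\<^sub>p [:0, of_real (r / k^2):]) z)
       \<le> (cmod l0 * cmod (1 + Phi n k R r \<alpha> \<beta>)
           + cmod (Bop l0 l1 l2 n (monom 1 n) z) / k^n
             * cmod (of_real (R^n) + of_real (r^n) * Phi n k R r \<alpha> \<beta>))
         * (SUP w\<in>{w. cmod w = k}. cmod (poly P w))"
proof -
  define \<Phi> where "\<Phi> = Phi n k R r \<alpha> \<beta>"
  define L where "L = LL l0 l1 l2 n R r \<Phi> z"
  define M where "M = (SUP w\<in>{w. cmod w = k}. cmod (poly P w))"
  define S where "S = reflk k n P"
  define X where "X = monom (1::complex) n"
  have k0: "k > 0" using k by simp
  have Ph: "cmod \<Phi> \<le> ((R+k)/(r+k))^n"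
  proof -
    define q where "q = (R+k)/(r+k)"
    have "q \<ge> 1" unfolding q_def using Rr k by (simp add: field_simps)
    hence qn: "q^n \<ge> 1" by (rule one_le_power)
    have "cmod \<Phi> \<le> cmod (\<beta> * complex_of_real (q^n - cmod \<alpha>)) + cmod \<alpha>"
      unfolding \<Phi>_def Phi_def q_def add.commute[of k r] by (rule norm_triangle_ineq4)
    also have "cmod (\<beta> * complex_of_real (q^n - cmod \<alpha>)) = cmod \<beta> * (q^n - cmod \<alpha>)"
    proof -
      have "q^n - cmod \<alpha> \<ge> 0" using qn a by simp
      then show ?thesis by (simp only: norm_mult norm_of_real abs_of_nonneg)
    qed
    also have "cmod \<beta> * (q^n - cmod \<alpha>) \<le> 1 * (q^n - cmod \<alpha>)"
      using b qn a by (intro mult_right_mono) auto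
    finally show ?thesis unfolding q_def by simp
  qed
  have sph: "{w. cmod w = k} = sphere (0::complex) k" by auto
  have bdd: "bdd_above ((\<lambda>w. cmod (poly P w)) ` {w. cmod w = k})"
    unfolding sph
    by (intro bounded_imp_bdd_above compact_imp_bounded compact_continuous_image continuous_intros) simp
  have ne: "{w. cmod w = k} \<noteq> {}"
  proof -
    have "(of_real k :: complex) \<in> {w. cmod w = k}" using k0 by simp
    then show ?thesis by blast
  qed
  have F1: "cmod (poly P w) \<le> M" if "cmod w = k" for w
    unfolding M_def by (rule cSUP_upper[OF _ bdd]) (use that in simp)
  have M0: "M \<ge> 0" using F1[of "of_real k"] k0 by (smt (verit) norm_ge_zero norm_of_real)
  have F2: "cmod (poly P u) \<le> M" if "cmod u \<le> k" for u
    by (rule max_modulus_poly[OF k0 F1 that])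
  have eqS: "S \<circ>\<^sub>p [:0, of_real c:] = smult (of_real (k^n)) (reflect_conj n P \<circ>\<^sub>p [:0, of_real (c / k^2):])" for c
    unfolding S_def reflk_def pcompose_smult pcompose_assoc[symmetric] lin_pcomp
    by (simp add: field_simps)
  have LS: "cmod (L S) = k^n * cmod (Bop l0 l1 l2 n (reflect_conj n P \<circ>\<^sub>p [:0, of_real (R / k^2):]) z
               + \<Phi> * Bop l0 l1 l2 n (reflect_conj n P \<circ>\<^sub>p [:0, of_real (r / k^2):]) z)"
  proof -
    have "L S = of_real (k^n) * (Bop l0 l1 l2 n (reflect_conj n P \<circ>\<^sub>p [:0, of_real (R / k^2):]) z
               + \<Phi> * Bop l0 l1 l2 n (reflect_conj n P \<circ>\<^sub>p [:0, of_real (r / k^2):]) z)"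
      unfolding L_def LL_def eqS Bop_smult by (simp only: algebra_simps)
    then show ?thesis using k0 by (simp only: norm_mult norm_of_real abs_of_nonneg zero_le_power less_imp_le)
  qed
  have L1: "cmod (L [:1:]) = cmod l0 * cmod (1 + \<Phi>)" unfolding L_def LL_const by (simp add: norm_mult)
  have LX: "cmod (L X) / k^n = cmod (Bop l0 l1 l2 n (monom 1 n) z) / k^n * cmod (of_real (R^n) + of_real (r^n) * \<Phi>)"
    unfolding L_def X_def LL_monom by (simp add: norm_mult)
  have LP: "L P = Bop l0 l1 l2 n (P \<circ>\<^sub>p [:0, of_real R:]) z + \<Phi> * Bop l0 l1 l2 n (P \<circ>\<^sub>p [:0, of_real r:]) z"
    unfolding L_def LL_def ..
  have main: "cmod (L P) + cmod (L S) \<le> (cmod (L [:1:]) + cmod (L X) / k^n) * M"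
  proof (cases "P = 0")
    case True
    have "L 0 = 0" unfolding L_def LL_def Bop_def by simp
    moreover have "S = 0" unfolding S_def reflk_def True reflect_conj_0 by simp
    moreover have "0 \<le> (cmod (L [:1:]) + cmod (L X) / k ^ n) * M"
      using M0 k0 by (intro mult_nonneg_nonneg add_nonneg_nonneg divide_nonneg_nonneg) auto
    ultimately show ?thesis using True by simp
  next
    case Pn0: False
    have Mpos: "M > 0"
    proof (rule ccontr)
      assume "\<not> M > 0"
      hence "M = 0" using M0 by simp
      hence "poly P u = 0" if "cmod u \<le> k" for u using F2[OF that] by simp
      hence "of_real ` {0..k} \<subseteq> {x. poly P x = 0}" using k0 by auto
      moreover have "finite {x. poly P x = 0}" by (rule poly_roots_finite[OF Pn0])
      ultimately have "finite (of_real ` {0..k} :: complex set)" by (rule finite_subset)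
      hence "finite {0..k}" by (rule finite_imageD) (simp add: inj_on_def)
      then show False using infinite_Icc[OF k0] by blast
    qed
    have degS: "degree S \<le> n" unfolding S_def by (rule degree_reflk)
    have pS: "poly S w = (w / of_real k) ^ n * cnj (poly P (of_real (k^2) / cnj w))" if "w \<noteq> 0" for w
      unfolding S_def by (rule poly_reflk[OF P that k0])
    have mS: "cmod (poly S w) = (cmod w / k) ^ n * cmod (poly P (of_real (k^2) / cnj w))" if "w \<noteq> 0" for w
      using pS[OF that] k0 by (simp add: norm_mult norm_power norm_divide)
    have vk: "cmod (of_real (k^2) / cnj w) = k^2 / cmod w" for w
      using k0 by (simp add: norm_divide norm_power)
    have vle: "cmod (of_real (k^2) / cnj w) \<le> k" if "cmod w \<ge> k" for w
    proof -
      have pos: "cmod w > 0" using that k0 by linarith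
      have "k * k \<le> k * cmod w" using that k0 by (intro mult_left_mono) auto
      then show ?thesis unfolding vk using pos by (simp add: divide_le_eq power2_eq_square mult.commute)
    qed
    have vv: "of_real (k^2) / cnj (of_real (k^2) / cnj w) = w" if "w \<noteq> 0" for w
      using that k0 by (simp add: field_simps)
    have S1: "cmod (poly S w) \<le> M" if "cmod w = k" for w
    proof -
      have w0: "w \<noteq> 0" using that k0 by auto
      have "cmod (poly S w) = cmod (poly P (of_real (k^2) / cnj w))" using mS[OF w0] that k0 by simp
      also have "\<dots> \<le> M" by (rule F2) (use vle that in simp)
      finally show ?thesis .
    qed
    have S2: "cmod (poly S u) \<le> M" if "cmod u \<le> k" for u
      by (rule max_modulus_poly[OF k0 S1 that])
    have outP: "cmod (poly P w) \<le> (cmod w / k)^n * M" if "cmod w \<ge> k" for w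
    proof -
      have w0: "w \<noteq> 0" using that k0 by auto
      define v where "v = of_real (k^2) / cnj w"
      have v0: "v \<noteq> 0" using w0 k0 by (simp add: v_def)
      have "cmod (poly S v) = (cmod v / k) ^ n * cmod (poly P w)" using mS[OF v0] vv[OF w0] by (simp add: v_def)
      moreover have "cmod v / k = k / cmod w" using vk[of w] k0 by (simp add: v_def power2_eq_square)
      ultimately have "cmod (poly P w) = (cmod w / k)^n * cmod (poly S v)" using k0 w0
        by (simp add: power_divide field_simps)
      also have "\<dots> \<le> (cmod w / k)^n * M"
        by (intro mult_left_mono S2) (use vle that k0 in \<open>auto simp: v_def\<close>)
      finally show ?thesis .
    qed
    have outS: "cmod (poly S w) \<le> (cmod w / k)^n * M" if "cmod w \<ge> k" for w
    proof -
      have w0: "w \<noteq> 0" using that k0 by auto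
      have "cmod (poly P (of_real (k^2) / cnj w)) \<le> M"
        by (rule F2) (use vle that in auto)
      then show ?thesis unfolding mS[OF w0] by (intro mult_left_mono) (use k0 in auto)
    qed
    have cP: "cmod (coeff P n) \<le> M / k^n"
    proof -
      have "cmod (poly S 0) \<le> M" using S2[of 0] k0 by simp
      then show ?thesis unfolding S_def poly_reflk_0 using k0 by (simp add: norm_mult norm_power field_simps mult.commute)
    qed
    have cS: "cmod (coeff S n) \<le> M / k^n"
    proof -
      have "cmod (poly P 0) \<le> M" using F2[of 0] k0 by simp
      then show ?thesis unfolding S_def coeff_reflk_n[OF k0] using k0
        by (simp add: norm_divide norm_power poly_0_coeff_0 field_simps)
    qed
    define FX where "FX = smult (of_real (M / k^n)) X"
    have dFX: "degree FX = n" unfolding FX_def X_def using Mpos k0 by (simp add: degree_monom_eq)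
    have rFX: "cmod w < k" if "poly FX w = 0" for w
      using that Mpos k0 by (simp add: FX_def X_def poly_monom)
    have mFX: "cmod (poly FX w) = (cmod w / k)^n * M" for w
      using Mpos k0 by (simp add: FX_def X_def poly_monom norm_mult norm_power norm_divide power_divide)
    have cFX: "cmod (coeff FX n) = M / k^n" using Mpos k0 by (simp add: FX_def X_def norm_divide norm_power)
    have LFX: "cmod (L FX) = M / k^n * cmod (L X)"
      unfolding FX_def L_def LL_smult using Mpos k0 by (simp add: norm_mult norm_divide norm_power)
    have "cmod (L P) \<le> cmod (L FX)" unfolding L_def
      by (rule Dom[OF n k0 Rr Ph U z P dFX rFX]) (use outP mFX cP cFX in auto)
    hence AP: "cmod (L P) \<le> M / k^n * cmod (L X)" using LFX by simp
    have "cmod (L S) \<le> cmod (L FX)" unfolding L_def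
      by (rule Dom[OF n k0 Rr Ph U z degS dFX rFX]) (use outS mFX cS cFX in auto)
    hence AS: "cmod (L S) \<le> M / k^n * cmod (L X)" using LFX by simp
    have LX0: "L X \<noteq> 0" unfolding L_def
      by (rule Z[OF n _ _ k0 Rr Ph U z]) (use k0 in \<open>auto simp: X_def degree_monom_eq poly_monom\<close>)
    have B: "cmod (L P - lam * of_real M * L [:1:]) \<le> cmod (L S - cnj lam * of_real (M / k^n) * L X)"
      if lam: "cmod lam > 1" for lam
    proof -
      define f where "f = P - [:lam * of_real M:]"
      have df: "degree f \<le> n" unfolding f_def using P n
        by (intro degree_diff_le) auto
      have fnz: "poly f u \<noteq> 0" if "cmod u \<le> k" for u
      proof
        assume "poly f u = 0"
        hence "poly P u = lam * of_real M" by (simp add: f_def)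
        hence "cmod (poly P u) = cmod lam * M" using Mpos by (simp add: norm_mult)
        moreover have "cmod lam * M > M" using lam Mpos by simp
        ultimately show False using F2[OF that] by simp
      qed
      have bl1: "cmod (poly f w) \<le> (cmod w / k)^n * cmod (poly f (of_real (k^2) / cnj w))" if "cmod w \<ge> k" for w
        by (rule blaschke(1)[OF k0 df _ that]) (use fnz in blast)
      have bl2: "cmod (coeff f n) * k^n \<le> cmod (poly f 0)"
        by (rule blaschke(2)[OF k0 df]) (use fnz in blast)
      define F where "F = reflk k n f"
      have pF: "poly F w = (w / of_real k) ^ n * cnj (poly f (of_real (k^2) / cnj w))" if "w \<noteq> 0" for w
        unfolding F_def by (rule poly_reflk[OF df that k0])
      have cFn: "coeff F n = cnj (poly f 0) / of_real (k^n)"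
        unfolding F_def coeff_reflk_n[OF k0] by (simp add: poly_0_coeff_0)
      have dF: "degree F = n"
      proof (rule antisym)
        show "degree F \<le> n" unfolding F_def by (rule degree_reflk)
        have "coeff F n \<noteq> 0" unfolding cFn using fnz[of 0] k0 by simp
        then show "n \<le> degree F" by (rule le_degree)
      qed
      have rF: "cmod w < k" if "poly F w = 0" for w
      proof (rule ccontr)
        assume "\<not> cmod w < k"
        hence w: "cmod w \<ge> k" by simp
        hence w0: "w \<noteq> 0" using k0 by auto
        have "poly f (of_real (k^2) / cnj w) = 0" using that pF[OF w0] w0 k0 by simp
        moreover have "cmod (of_real (k^2) / cnj w) \<le> k" using vle w by simp
        ultimately show False using fnz by blast
      qed
      have domf: "cmod (poly f w) \<le> cmod (poly F w)" if "cmod w \<ge> k" for w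
      proof -
        have w0: "w \<noteq> 0" using that k0 by auto
        have "cmod (poly F w) = (cmod w / k)^n * cmod (poly f (of_real (k^2) / cnj w))"
          using pF[OF w0] k0 by (simp add: norm_mult norm_power norm_divide)
        then show ?thesis using bl1[OF that] by simp
      qed
      have cf: "cmod (coeff f n) \<le> cmod (coeff F n)"
        unfolding cFn using bl2 k0 by (simp add: norm_divide norm_power field_simps)
      have "cmod (L f) \<le> cmod (L F)" unfolding L_def
        by (rule Dom[OF n k0 Rr Ph U z df dF rF domf cf])
      moreover have "L f = L P - lam * of_real M * L [:1:]"
        unfolding f_def L_def LL_diff LL_const by (simp add: algebra_simps)
      moreover have "L F = L S - cnj lam * of_real (M / k^n) * L X"
        unfolding F_def f_def reflk_diff_const[OF k0] L_def LL_diff LL_smult S_def X_def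
        by (simp add: algebra_simps)
      ultimately show ?thesis by simp
    qed
    define C1 where "C1 = of_real (M / k^n) * L X"
    define C0 where "C0 = of_real M * L [:1:]"
    have C10: "C1 \<noteq> 0" unfolding C1_def using LX0 Mpos k0 by simp
    have bC1: "cmod (L S) \<le> cmod C1" using AS Mpos k0 unfolding C1_def by (simp add: norm_mult norm_divide norm_power)
    define u where "u = (if L S = 0 then 1 else L S / of_real (cmod (L S)))"
    have nu: "cmod u = 1" unfolding u_def by (simp add: norm_divide)
    have bu: "L S = u * of_real (cmod (L S))" unfolding u_def by simp
    have key: "cmod (L P) + cmod (L S) \<le> t * (cmod C0 + cmod C1)" if t: "t > 1" for t
    proof -
      define lam where "lam = of_real t * cnj u * C1 / of_real (cmod C1)"
      have nl: "cmod lam = t" unfolding lam_def using t C10 nu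
        by (simp add: norm_mult norm_divide)
      have cl: "cnj lam * C1 = of_real t * u * of_real (cmod C1)"
        unfolding lam_def using C10 nu by (simp add: field_simps complex_norm_square[symmetric] power2_eq_square)
      have "cmod (L P - lam * C0) \<le> cmod (L S - cnj lam * C1)"
        using B[of lam] nl t unfolding C0_def C1_def by (simp add: mult.assoc)
      also have "L S - cnj lam * C1 = u * of_real (cmod (L S) - t * cmod C1)"
        unfolding cl by (subst bu) (simp add: algebra_simps)
      also have "cmod \<dots> = t * cmod C1 - cmod (L S)"
      proof -
        have "1 * cmod C1 \<le> t * cmod C1" using t by (intro mult_right_mono) auto
        then have xn: "cmod (L S) - t * cmod C1 \<le> 0" using bC1 by simp
        show ?thesis by (simp only: norm_mult nu norm_of_real abs_of_nonpos[OF xn] mult_1_left minus_diff_eq)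
      qed
      finally have h: "cmod (L P - lam * C0) \<le> t * cmod C1 - cmod (L S)" .
      have "cmod (L P) - t * cmod C0 \<le> cmod (L P - lam * C0)"
        using norm_triangle_ineq2[of "L P" "lam * C0"] nl by (simp add: norm_mult)
      then show ?thesis using h by (simp add: algebra_simps)
    qed
    have "cmod (L P) + cmod (L S) \<le> cmod C0 + cmod C1"
    proof (rule field_le_mult_one_interval)
      fix s :: real assume s: "0 < s" "s < 1"
      have "cmod (L P) + cmod (L S) \<le> (1/s) * (cmod C0 + cmod C1)" using key[of "1/s"] s by simp
      then show "s * (cmod (L P) + cmod (L S)) \<le> cmod C0 + cmod C1" using s by (simp add: field_simps)
    qed
    also have "cmod C0 + cmod C1 = (cmod (L [:1:]) + cmod (L X) / k^n) * M"
      unfolding C0_def C1_def using Mpos k0 by (simp add: norm_mult norm_divide norm_power algebra_simps)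
    finally show ?thesis .
  qed
  show ?thesis using main unfolding LP LS L1 LX M_def[symmetric] \<Phi>_def[symmetric] .
qed

end
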